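(* Let $G$ be a group, $E$ a real Banach space, and $f\in KJ(G;E)$. For $m\ge 2$ let $\varphi_m(x)=\lim_{k\to\infty}\frac{1}{m^k}f(x^{m^k})$. Then $\varphi_2=\varphi_m$ for every $m\ge 2$.
   Context: $KJ(G;E)$ is the space of functions $f\colon G\to E$ for which there exists $c>0$ with $\|f(xy)+f(xy^{-1})-2f(x)\|\le c$ for all $x,y\in G$. For $f\in KJ(G;E)$ and $m\ge2$ the limit defining $\varphi_m(x)$ exists in $E$ for every $x\in G$. *)

theory Defs
  imports "HOL-Analysis.Analysis" "HOL-Algebra.Group"
begin

definition KJ :: "('a, 'c) monoid_scheme \<Rightarrow> ('a \<Rightarrow> 'b::real_normed_vector) set" where
  "KJ G = {f. \<exists>c>0. \<forall>x\<in>carrier G. \<forall>y\<in>carrier G.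
      norm (f (x \<otimes>\<^bsub>G\<^esub> y) + f (x \<otimes>\<^bsub>G\<^esub> inv\<^bsub>G\<^esub> y) - 2 *\<^sub>R f x) \<le> c}"

definition phi :: "('a, 'c) monoid_scheme \<Rightarrow> ('a \<Rightarrow> 'b::real_normed_vector) \<Rightarrow> nat \<Rightarrow> 'a \<Rightarrow> 'b" where
  "phi G f m x = lim (\<lambda>k. (1 / real (m ^ k)) *\<^sub>R f (x [^]\<^bsub>G\<^esub> (m ^ k)))"

end

theory Submission
  imports Defs
begin

lemma add_approx:
  fixes G (structure) and f :: "'a \<Rightarrow> 'b::real_normed_vector"
  assumes grp: "group G" and x: "x \<in> carrier G"
    and J: "\<forall>a\<in>carrier G. \<forall>b\<in>carrier G.
      norm (f (a \<otimes>\<^bsub>G\<^esub> b) + f (a \<otimes>\<^bsub>G\<^esub> inv\<^bsub>G\<^esub> b) - 2 *\<^sub>R f a) \<le> c"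
  shows "norm (f (x [^]\<^bsub>G\<^esub> (i+j::int)) + f (x [^]\<^bsub>G\<^esub> (0::int))
            - f (x [^]\<^bsub>G\<^esub> i) - f (x [^]\<^bsub>G\<^esub> j)) \<le> 3/2*c"
proof -
  interpret group G by (rule grp)
  let ?g = "\<lambda>k::int. f (x [^] k)"
  have m: "x [^] i \<otimes> x [^] j = x [^] (i+j)" for i j :: int
    using int_pow_mult[OF x] by simp
  have d: "x [^] i \<otimes> inv (x [^] j) = x [^] (i-j)" for i j :: int
    using int_pow_diff[OF x] by simp
  have J': "norm (?g (i+j) + ?g (i-j) - 2 *\<^sub>R ?g i) \<le> c" for i j :: int
    using J[rule_format, of "x [^] i" "x [^] j"] x by (simp add: m d)
  have J1: "norm (?g (i+j) + ?g (i-j) - 2 *\<^sub>R ?g i) \<le> c" by (rule J')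
  have J2: "norm (?g (i+j) + ?g (j-i) - 2 *\<^sub>R ?g j) \<le> c" using J'[of j i] by (simp add: add.commute)
  have J3: "norm (?g (i-j) + ?g (j-i) - 2 *\<^sub>R ?g 0) \<le> c" using J'[of 0 "i-j"] by simp
  have eq: "2 *\<^sub>R (?g (i+j) + ?g 0 - ?g i - ?g j) =
     (?g (i+j) + ?g (i-j) - 2 *\<^sub>R ?g i) + (?g (i+j) + ?g (j-i) - 2 *\<^sub>R ?g j)
     - (?g (i-j) + ?g (j-i) - 2 *\<^sub>R ?g 0)"
    by (simp add: algebra_simps scaleR_2)
  have "norm (2 *\<^sub>R (?g (i+j) + ?g 0 - ?g i - ?g j)) \<le> 3*c"
    unfolding eq using J1 J2 J3 norm_triangle_ineq4 norm_triangle_ineq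
    by (smt (verit, best))
  then show ?thesis by simp
qed

lemma nat_add_approx:
  fixes f :: "'a \<Rightarrow> 'b::real_normed_vector"
  assumes grp: "group G" and x: "x \<in> carrier G"
    and J: "\<forall>a\<in>carrier G. \<forall>b\<in>carrier G.
      norm (f (a \<otimes>\<^bsub>G\<^esub> b) + f (a \<otimes>\<^bsub>G\<^esub> inv\<^bsub>G\<^esub> b) - 2 *\<^sub>R f a) \<le> c"
  shows "norm (f (x [^]\<^bsub>G\<^esub> (u+v::nat)) - f (x [^]\<^bsub>G\<^esub> u) - f (x [^]\<^bsub>G\<^esub> v))
     \<le> 3/2*c + norm (f \<one>\<^bsub>G\<^esub>)"
proof -
  have "norm (f (x [^]\<^bsub>G\<^esub> (int u + int v)) + f (x [^]\<^bsub>G\<^esub> (0::int))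
            - f (x [^]\<^bsub>G\<^esub> (int u)) - f (x [^]\<^bsub>G\<^esub> (int v))) \<le> 3/2*c"
    by (rule add_approx[OF grp x J])
  then have h: "norm (f (x [^]\<^bsub>G\<^esub> (u+v)) + f \<one>\<^bsub>G\<^esub>
            - f (x [^]\<^bsub>G\<^esub> u) - f (x [^]\<^bsub>G\<^esub> v)) \<le> 3/2*c"
    by (metis int_pow_0 int_pow_int of_nat_add)
  have "norm (f (x [^]\<^bsub>G\<^esub> (u+v::nat)) - f (x [^]\<^bsub>G\<^esub> u) - f (x [^]\<^bsub>G\<^esub> v))
     \<le> norm (f (x [^]\<^bsub>G\<^esub> (u+v)) + f \<one>\<^bsub>G\<^esub>
            - f (x [^]\<^bsub>G\<^esub> u) - f (x [^]\<^bsub>G\<^esub> v)) + norm (f \<one>\<^bsub>G\<^esub>)"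
    using norm_triangle_ineq4[of "f (x [^]\<^bsub>G\<^esub> (u+v)) + f \<one>\<^bsub>G\<^esub>
            - f (x [^]\<^bsub>G\<^esub> u) - f (x [^]\<^bsub>G\<^esub> v)" "f \<one>\<^bsub>G\<^esub>"]
    by (simp add: algebra_simps)
  with h show ?thesis by linarith
qed

lemma mult_approx:
  fixes g :: "nat \<Rightarrow> 'b::real_normed_vector"
  assumes A: "\<And>u v. norm (g (u+v) - g u - g v) \<le> D"
  shows "norm (g (n*a) - real n *\<^sub>R g a) \<le> real n * D + norm (g 0)"
proof (induction n)
  case 0 then show ?case by simp
next
  case (Suc n)
  have E: "g (Suc n * a) - real (Suc n) *\<^sub>R g a = (g (n*a + a) - g (n*a) - g a) + (g (n*a) - real n *\<^sub>R g a)"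
    by (simp add: algebra_simps add.commute)
  have "norm (g (Suc n * a) - real (Suc n) *\<^sub>R g a) \<le> norm (g (n*a + a) - g (n*a) - g a) + norm (g (n*a) - real n *\<^sub>R g a)"
    by (subst E) (rule norm_triangle_ineq)
  then have "norm (g (Suc n * a) - real (Suc n) *\<^sub>R g a) \<le> D + (real n * D + norm (g 0))"
    using A[of "n*a" a] Suc by linarith
  then show ?case by (simp add: algebra_simps)
qed

lemma ratio_conv:
  fixes g :: "nat \<Rightarrow> 'b::banach"
  assumes M: "\<And>n a. n \<ge> 1 \<Longrightarrow> norm (g (n*a) - real n *\<^sub>R g a) \<le> real n * E"
    and E0: "E \<ge> 0"
  shows "\<exists>L. \<forall>m\<ge>2. (\<lambda>k. (1 / real (m^k)) *\<^sub>R g (m^k)) \<longlonglongrightarrow> L"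
proof -
  define u where "u n = (1 / real n) *\<^sub>R g n" for n
  have bd: "norm (u a - u b) \<le> E / real a + E / real b" if a: "a \<ge> 1" and b: "b \<ge> 1" for a b
  proof -
    have h1: "norm (g (a*b) - real a *\<^sub>R g b) \<le> real a * E" using M[OF a] .
    have h2: "norm (g (a*b) - real b *\<^sub>R g a) \<le> real b * E" using M[OF b, of a] by (simp add: mult.commute)
    have "norm (real b *\<^sub>R g a - real a *\<^sub>R g b) \<le> norm (g (a*b) - real a *\<^sub>R g b) + norm (g (a*b) - real b *\<^sub>R g a)"
      using norm_triangle_ineq4[of "g (a*b) - real a *\<^sub>R g b" "g (a*b) - real b *\<^sub>R g a"]
      by (simp add: algebra_simps)
    with h1 h2 have h3: "norm (real b *\<^sub>R g a - real a *\<^sub>R g b) \<le> (real a + real b) * E"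
      by (simp add: algebra_simps)
    have pa: "real a > 0" and pb: "real b > 0" using a b by auto
    have "u a - u b = (1 / (real a * real b)) *\<^sub>R (real b *\<^sub>R g a - real a *\<^sub>R g b)"
      using pa pb by (simp add: u_def algebra_simps)
    then have "norm (u a - u b) = norm (real b *\<^sub>R g a - real a *\<^sub>R g b) / (real a * real b)"
      using pa pb by simp
    also have "\<dots> \<le> (real a + real b) * E / (real a * real b)"
      using h3 pa pb by (simp add: divide_right_mono)
    also have "\<dots> = E / real a + E / real b"
      using pa pb by (simp add: field_simps)
    finally show ?thesis .
  qed
  have "Cauchy u"
  proof (rule metric_CauchyI)
    fix e :: real assume e: "e > 0"
    obtain N :: nat where N: "real N > 2 * E / e" using reals_Archimedean2 by blast
    define N' where "N' = max 1 N"
    have "\<forall>m\<ge>N'. \<forall>n\<ge>N'. dist (u m) (u n) < e"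
    proof (intro allI impI)
      fix m n assume m: "m \<ge> N'" and n: "n \<ge> N'"
      have m1: "m \<ge> 1" and n1: "n \<ge> 1" using m n by (auto simp: N'_def)
      have mN: "real m \<ge> real N" "real n \<ge> real N" using m n by (auto simp: N'_def)
      have Npos: "real N > 0" using N e E0
        by (smt (verit) divide_nonneg_pos of_nat_0_less_iff of_nat_less_0_iff)
      have "2 * E / e < real N" by (rule N)
      then have eN: "2 * E < e * real N" using e by (simp add: divide_less_eq mult.commute)
      have "E / real m \<le> E / real N" using mN Npos E0 by (simp add: frac_le)
      moreover have "E / real n \<le> E / real N" using mN Npos E0 by (simp add: frac_le)
      moreover have "2 * (E / real N) < e" using eN Npos by (simp add: field_simps)
      ultimately have "E / real m + E / real n < e" by linarith
      then show "dist (u m) (u n) < e" using bd[OF m1 n1] by (simp add: dist_norm)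
    qed
    then show "\<exists>M. \<forall>m\<ge>M. \<forall>n\<ge>M. dist (u m) (u n) < e" by blast
  qed
  then obtain L where L: "u \<longlonglongrightarrow> L" using Cauchy_convergent_iff convergent_def by blast
  have "(\<lambda>k. (1 / real (m^k)) *\<^sub>R g (m^k)) \<longlonglongrightarrow> L" if m: "m \<ge> 2" for m :: nat
  proof -
    have sm: "strict_mono (\<lambda>k::nat. m^k)"
      using m by (intro strict_monoI power_strict_increasing) auto
    have "(u \<circ> (\<lambda>k. m^k)) \<longlonglongrightarrow> L" by (rule LIMSEQ_subseq_LIMSEQ[OF L sm])
    then show ?thesis by (simp add: u_def o_def)
  qed
  then show ?thesis by blast
qed

theorem lemma2p6:
  fixes G :: "('a, 'c) monoid_scheme" and f :: "'a \<Rightarrow> 'b::banach" and m :: nat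
  assumes "group G" and "f \<in> KJ G" and "m \<ge> 2"
  shows "\<forall>x\<in>carrier G. phi G f 2 x = phi G f m x"
proof
  fix x assume x: "x \<in> carrier G"
  obtain c where c: "c > 0" and J: "\<forall>a\<in>carrier G. \<forall>b\<in>carrier G.
      norm (f (a \<otimes>\<^bsub>G\<^esub> b) + f (a \<otimes>\<^bsub>G\<^esub> inv\<^bsub>G\<^esub> b) - 2 *\<^sub>R f a) \<le> c"
    using assms(2) unfolding KJ_def by blast
  define g where "g n = f (x [^]\<^bsub>G\<^esub> (n::nat))" for n
  define D where "D = 3/2*c + norm (f \<one>\<^bsub>G\<^esub>)"
  have A: "norm (g (u+v) - g u - g v) \<le> D" for u v
    unfolding g_def D_def by (rule nat_add_approx[OF assms(1) x J])
  have g0: "g 0 = f \<one>\<^bsub>G\<^esub>" by (simp add: g_def)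
  have M: "norm (g (n*a) - real n *\<^sub>R g a) \<le> real n * (D + norm (g 0))" if n: "n \<ge> 1" for n a
  proof -
    have "norm (g (n*a) - real n *\<^sub>R g a) \<le> real n * D + norm (g 0)" by (rule mult_approx[OF A])
    moreover have "norm (g 0) \<le> real n * norm (g 0)" using n
    proof -
      have "real n \<ge> 1" using n by simp
      then show ?thesis using mult_right_mono[of 1 "real n" "norm (g 0)"] by simp
    qed
    ultimately show ?thesis by (simp add: algebra_simps)
  qed
  have E0: "D + norm (g 0) \<ge> 0" using c by (simp add: D_def)
  obtain L where L: "\<forall>m\<ge>2. (\<lambda>k. (1 / real (m^k)) *\<^sub>R g (m^k)) \<longlonglongrightarrow> L"
    using ratio_conv[OF M E0] by blast
  have L2: "(\<lambda>k. (1 / real ((2::nat)^k)) *\<^sub>R g (2^k)) \<longlonglongrightarrow> L" using L[rule_format, of 2] by simp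
  have "phi G f 2 x = L" unfolding phi_def using L2 by (intro limI) (simp add: g_def)
  moreover have "phi G f m x = L" unfolding phi_def using L assms(3) by (intro limI) (simp add: g_def)
  ultimately show "phi G f 2 x = phi G f m x" by simp
qed

end
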